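(* Let $G$ be a $k\times l$ generator matrix of an $A$-code $C$, and suppose that for each $i$ the $i$-th row $g^{(i)}$ of $G$ is monic. Then $(g^{(1)},\ldots,g^{(k)})$ is a basis of divisors of $C$ if and only if the following three conditions hold: (i) $G$ is in echelon form, i.e. $L_{\mathrm{ind}}(g^{(1)})<L_{\mathrm{ind}}(g^{(2)})<\cdots<L_{\mathrm{ind}}(g^{(k)})$; (ii) $L_{\mathrm{coef}}(g^{(i)})$ divides $f(x)$ in $\mathbb{F}[x]$ for every $i$; (iii) for every $i$, $h_i g^{(i)}$ is an $A$-linear combination of $g^{(i+1)},\ldots,g^{(k)}$, where $h_i(x)=f(x)/L_{\mathrm{coef}}(g^{(i)})$. Moreover, the equivalence remains true if condition (iii) is replaced by (iii$'$) $\dim_{\mathbb{F}} C=\sum_{i=1}^k \bigl(m-\deg L_{\mathrm{coef}}(g^{(i)})\bigr)$.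
   Context: Let $\mathbb{F}$ be a finite field, $f(x)\in\mathbb{F}[x]$ a monic polynomial of degree $m$, and $A=\mathbb{F}[x]/\langle f(x)\rangle$; elements of $A$ are identified with polynomials of degree $<m$, arithmetic done modulo $f$. An $A$-code of length $l$ is an $A$-submodule of $A^l$; it is in particular an $\mathbb{F}$-subspace of $A^l\cong\mathbb{F}^{lm}$, whence $\dim_{\mathbb{F}}$. A generator matrix of an $A$-code is a matrix over $A$ whose rows generate it as an $A$-module. For $u=(u_1,\ldots,u_l)\in A^l$, the leading index $L_{\mathrm{ind}}(u)$ is the smallest $i$ with $u_i\neq 0$ ($L_{\mathrm{ind}}(0)=\infty$) and the leading coefficient is $L_{\mathrm{coef}}(u)=u_{L_{\mathrm{ind}}(u)}$; $u$ is monic if $L_{\mathrm{coef}}(u)$ is a monic polynomial. For a nonzero $A$-code $C$, $L_{\mathrm{ind}}(C)=\min\{L_{\mathrm{ind}}(u):u\in C\}$, and $L_{\mathrm{coef}}(C)$ is the monic polynomial $g$ of minimum degree such that some $c\in C$ has $L_{\mathrm{ind}}(c)=L_{\mathrm{ind}}(C)$ and $L_{\mathrm{coef}}(c)=g$; any such $c$ is a leading element of $C$. Set $C^{(1)}=C$ and, while $C^{(n)}\ne 0$, $C^{(n+1)}=\{c\in C^{(n)}: L_{\mathrm{ind}}(c)>L_{\mathrm{ind}}(C^{(n)})\}$; let $k$ be the largest integer with $C^{(k)}\neq 0$. A tuple $(g^{(1)},\ldots,g^{(k)})$ with $g^{(j)}$ a leading element of $C^{(j)}$ for each $j$ is called a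 basis of divisors of $C$. *)

theory Defs
  imports "HOL-Computational_Algebra.Polynomial" "HOL-Library.Extended_Nat"
          "HOL-Library.Function_Algebras"
begin

text \<open>Setting: F is a finite field (type 'a), f a monic polynomial of degree m,
  A = F[x]/(f), elements of A are the polynomials p with p mod f = p
  (i.e. the remainders mod f).  A vector of A^l is a function
  nat => 'a poly, with coordinates indexed 0,...,l-1 and zero outside.\<close>

definition Aelems :: "'a::field poly \<Rightarrow> 'a poly set" where
  "Aelems f = {p. p mod f = p}"

definition Avecs :: "'a::field poly \<Rightarrow> nat \<Rightarrow> (nat \<Rightarrow> 'a poly) set" where
  "Avecs f l = {u. (\<forall>i<l. u i \<in> Aelems f) \<and> (\<forall>i\<ge>l. u i = 0)}"

definition Asmult :: "'a::field poly \<Rightarrow> 'a poly \<Rightarrow> (nat \<Rightarrow> 'a poly) \<Rightarrow> (nat \<Rightarrow> 'a poly)" where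
  "Asmult f a u = (\<lambda>j. (a * u j) mod f)"

definition A_code :: "'a::field poly \<Rightarrow> nat \<Rightarrow> (nat \<Rightarrow> 'a poly) set \<Rightarrow> bool" where
  "A_code f l C \<longleftrightarrow> C \<subseteq> Avecs f l \<and> 0 \<in> C \<and>
     (\<forall>u\<in>C. \<forall>v\<in>C. u + v \<in> C) \<and>
     (\<forall>a\<in>Aelems f. \<forall>u\<in>C. Asmult f a u \<in> C)"

definition Aspan :: "'a::field poly \<Rightarrow> (nat \<Rightarrow> nat \<Rightarrow> 'a poly) \<Rightarrow> nat set \<Rightarrow> (nat \<Rightarrow> 'a poly) set" where
  "Aspan f G I = {(\<lambda>j. (\<Sum>i\<in>I. a i * G i j) mod f) | a. \<forall>i\<in>I. a i \<in> Aelems f}"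

definition generator_matrix :: "'a::field poly \<Rightarrow> nat \<Rightarrow> nat \<Rightarrow> (nat \<Rightarrow> nat \<Rightarrow> 'a poly) \<Rightarrow> (nat \<Rightarrow> 'a poly) set \<Rightarrow> bool" where
  "generator_matrix f k l G C \<longleftrightarrow> A_code f l C \<and> (\<forall>i<k. G i \<in> Avecs f l) \<and> C = Aspan f G {..<k}"

definition dimF :: "(nat \<Rightarrow> 'a::field poly) set \<Rightarrow> nat" where
  "dimF C = vector_space.dim (\<lambda>c u. (\<lambda>j. smult c (u j))) C"

text \<open>Leading index (0-based; \<infinity> for the zero vector) and leading coefficient.\<close>
definition Lind :: "(nat \<Rightarrow> 'a::zero) \<Rightarrow> enat" where
  "Lind u = (if u = 0 then \<infinity> else enat (LEAST i. u i \<noteq> 0))"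

definition Lcoef :: "(nat \<Rightarrow> 'a::zero) \<Rightarrow> 'a" where
  "Lcoef u = u (LEAST i. u i \<noteq> 0)"

definition monic_vec :: "(nat \<Rightarrow> 'a::field poly) \<Rightarrow> bool" where
  "monic_vec u \<longleftrightarrow> u \<noteq> 0 \<and> lead_coeff (Lcoef u) = 1"

definition Lind_code :: "(nat \<Rightarrow> 'a::zero) set \<Rightarrow> enat" where
  "Lind_code C = (INF c\<in>C. Lind c)"

definition leading_element :: "(nat \<Rightarrow> 'a::field poly) set \<Rightarrow> (nat \<Rightarrow> 'a poly) \<Rightarrow> bool" where
  "leading_element C c \<longleftrightarrow> c \<in> C \<and> c \<noteq> 0 \<and> Lind c = Lind_code C \<and> lead_coeff (Lcoef c) = 1 \<and>
     (\<forall>c'\<in>C. c' \<noteq> 0 \<and> Lind c' = Lind_code C \<and> lead_coeff (Lcoef c') = 1 \<longrightarrow>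
        degree (Lcoef c) \<le> degree (Lcoef c'))"

text \<open>subcode C n = C^(n+1) (0-based).\<close>
fun subcode :: "(nat \<Rightarrow> 'a::zero) set \<Rightarrow> nat \<Rightarrow> (nat \<Rightarrow> 'a) set" where
  "subcode C 0 = C"
| "subcode C (Suc n) = {c \<in> subcode C n. Lind c > Lind_code (subcode C n)}"

definition nonzero_code :: "(nat \<Rightarrow> 'a::zero) set \<Rightarrow> bool" where
  "nonzero_code C \<longleftrightarrow> (\<exists>c\<in>C. c \<noteq> 0)"

definition basis_of_divisors :: "(nat \<Rightarrow> 'a::field poly) set \<Rightarrow> nat \<Rightarrow> (nat \<Rightarrow> nat \<Rightarrow> 'a poly) \<Rightarrow> bool" where
  "basis_of_divisors C k g \<longleftrightarrow>
     (\<forall>j<k. nonzero_code (subcode C j)) \<and> \<not> nonzero_code (subcode C k) \<and>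
     (\<forall>j<k. leading_element (subcode C j) (g j))"

end

theory Submission
  imports Defs "HOL-Library.FuncSet"
begin


lemma Lind_ge_iff: "x \<le> Lind w \<longleftrightarrow> (\<forall>t. enat t < x \<longrightarrow> w t = 0)"
proof (cases "w = 0")
  case True then show ?thesis by (simp add: Lind_def)
next
  case False
  then obtain t0 where t0: "w t0 \<noteq> 0" by (auto simp: fun_eq_iff)
  define n where "n = (LEAST t. w t \<noteq> 0)"
  have wn: "w n \<noteq> 0" unfolding n_def using t0 by (rule LeastI)
  have lt: "t < n \<Longrightarrow> w t = 0" for t unfolding n_def using not_less_Least by blast
  have L: "Lind w = enat n" using False by (simp add: Lind_def n_def)
  show ?thesis
  proof
    assume "x \<le> Lind w" then show "\<forall>t. enat t < x \<longrightarrow> w t = 0"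
      using L lt by (metis enat_ord_simps(2) order_less_le_trans)
  next
    assume H: "\<forall>t. enat t < x \<longrightarrow> w t = 0"
    show "x \<le> Lind w"
    proof (rule ccontr)
      assume "\<not> x \<le> Lind w" then have "enat n < x" using L by simp
      then show False using H wn by blast
    qed
  qed
qed

lemma Lind_eq:
  assumes "\<forall>t<n. w t = 0" "w n \<noteq> 0"
  shows "Lind w = enat n" "Lcoef w = w n" "(LEAST t. w t \<noteq> 0) = n"
proof -
  have "(LEAST t. w t \<noteq> 0) = n"
    by (rule Least_equality) (use assms in \<open>auto simp: not_le[symmetric]\<close>)
  moreover have "w \<noteq> 0" using assms(2) by auto
  ultimately show "Lind w = enat n" "Lcoef w = w n" "(LEAST t. w t \<noteq> 0) = n"
    by (auto simp: Lind_def Lcoef_def)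
qed

lemma Lind_gt: "enat n < Lind w \<Longrightarrow> w n = 0"
  using Lind_ge_iff[of "Lind w" w] by auto

lemma Lind_gtI: "(\<forall>t\<le>n. w t = 0) \<Longrightarrow> enat n < Lind w"
proof -
  assume "\<forall>t\<le>n. w t = 0"
  then have "enat (Suc n) \<le> Lind w" using Lind_ge_iff[of "enat (Suc n)" w] by auto
  then show ?thesis by (simp add: Suc_ile_eq)
qed

lemma Lind_geI: "(\<forall>t<n. w t = 0) \<Longrightarrow> enat n \<le> Lind w"
  using Lind_ge_iff[of "enat n" w] by auto

lemma Lind_ge_D: "enat n \<le> Lind w \<Longrightarrow> t < n \<Longrightarrow> w t = 0"
  using Lind_ge_iff[of "enat n" w] by auto

lemma Lind_add: "min (Lind u) (Lind v) \<le> Lind (u + v :: nat \<Rightarrow> 'a::monoid_add)"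
  unfolding Lind_ge_iff
  using Lind_ge_iff[of "Lind u" u] Lind_ge_iff[of "Lind v" v] by auto

lemma Lind_diff: "min (Lind u) (Lind v) \<le> Lind (u - v :: nat \<Rightarrow> 'a::group_add)"
  unfolding Lind_ge_iff
  using Lind_ge_iff[of "Lind u" u] Lind_ge_iff[of "Lind v" v] by auto

lemma Lind_Asmult: "Lind u \<le> Lind (Asmult f a u)"
  unfolding Lind_ge_iff Asmult_def
  using Lind_ge_iff[of "Lind u" u] by auto

lemma Lind_nonzero:
  assumes "w \<noteq> 0" "Lind w = enat n"
  shows "w n \<noteq> 0" "Lcoef w = w n" "\<forall>t<n. w t = 0"
proof -
  obtain t0 where t0: "w t0 \<noteq> 0" using assms(1) by (auto simp: fun_eq_iff)
  have n: "n = (LEAST t. w t \<noteq> 0)" using assms by (simp add: Lind_def)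
  show "w n \<noteq> 0" unfolding n using t0 by (rule LeastI)
  show "Lcoef w = w n" by (simp add: Lcoef_def n)
  show "\<forall>t<n. w t = 0" unfolding n using not_less_Least by blast
qed


lemma AspanI:
  assumes "finite I"
  shows "(\<lambda>t. (\<Sum>i\<in>I. a i * G i t) mod f) \<in> Aspan f G I"
proof -
  have "(\<Sum>i\<in>I. (a i mod f) * G i t) mod f = (\<Sum>i\<in>I. a i * G i t) mod f" for t
  proof -
    have "(\<Sum>i\<in>I. (a i mod f) * G i t) mod f = (\<Sum>i\<in>I. (a i mod f) * G i t mod f) mod f"
      by (simp add: mod_sum_eq)
    also have "\<dots> = (\<Sum>i\<in>I. a i * G i t mod f) mod f"
      by (simp add: mod_mult_left_eq)
    also have "\<dots> = (\<Sum>i\<in>I. a i * G i t) mod f"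
      by (simp add: mod_sum_eq)
    finally show ?thesis .
  qed
  moreover have "\<forall>i\<in>I. a i mod f \<in> Aelems f" by (simp add: Aelems_def)
  ultimately show ?thesis unfolding Aspan_def
    by (intro CollectI exI[of _ "\<lambda>i. a i mod f"]) auto
qed

lemma AspanE:
  assumes "v \<in> Aspan f G I"
  obtains a where "v = (\<lambda>t. (\<Sum>i\<in>I. a i * G i t) mod f)"
  using assms unfolding Aspan_def by blast

lemma Aspan_add:
  assumes "finite I" "u \<in> Aspan f G I" "v \<in> Aspan f G I"
  shows "u + v \<in> Aspan f G I"
proof -
  obtain a where a: "u = (\<lambda>t. (\<Sum>i\<in>I. a i * G i t) mod f)" using assms(2) by (rule AspanE)
  obtain b where b: "v = (\<lambda>t. (\<Sum>i\<in>I. b i * G i t) mod f)" using assms(3) by (rule AspanE)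
  have "u + v = (\<lambda>t. (\<Sum>i\<in>I. (a i + b i) * G i t) mod f)"
    by (simp add: a b fun_eq_iff poly_mod_add_left distrib_right sum.distrib)
  then show ?thesis using AspanI[OF assms(1)] by simp
qed

lemma Aspan_diff:
  assumes "finite I" "u \<in> Aspan f G I" "v \<in> Aspan f G I"
  shows "u - v \<in> Aspan f G I"
proof -
  obtain a where a: "u = (\<lambda>t. (\<Sum>i\<in>I. a i * G i t) mod f)" using assms(2) by (rule AspanE)
  obtain b where b: "v = (\<lambda>t. (\<Sum>i\<in>I. b i * G i t) mod f)" using assms(3) by (rule AspanE)
  have "u - v = (\<lambda>t. (\<Sum>i\<in>I. (a i - b i) * G i t) mod f)"
    by (simp add: a b fun_eq_iff poly_mod_diff_left left_diff_distrib sum_subtractf)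
  then show ?thesis using AspanI[OF assms(1)] by simp
qed

lemma Aspan_Asmult:
  assumes "finite I" "u \<in> Aspan f G I"
  shows "Asmult f c u \<in> Aspan f G I"
proof -
  obtain a where a: "u = (\<lambda>t. (\<Sum>i\<in>I. a i * G i t) mod f)" using assms(2) by (rule AspanE)
  have "Asmult f c u = (\<lambda>t. (\<Sum>i\<in>I. (c * a i) * G i t) mod f)"
    by (simp add: a Asmult_def fun_eq_iff mod_mult_right_eq sum_distrib_left mult.assoc)
  then show ?thesis using AspanI[OF assms(1)] by simp
qed

lemma Aspan_mono:
  assumes "I \<subseteq> J" "finite J" "v \<in> Aspan f G I"
  shows "v \<in> Aspan f G J"
proof -
  obtain a where a: "v = (\<lambda>t. (\<Sum>i\<in>I. a i * G i t) mod f)" using assms(3) by (rule AspanE)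
  have "(\<Sum>i\<in>J. (if i \<in> I then a i else 0) * G i t) = (\<Sum>i\<in>I. a i * G i t)" for t
  proof -
    have "(\<Sum>i\<in>J. (if i \<in> I then a i else 0) * G i t) = (\<Sum>i\<in>J. (if i \<in> I then a i * G i t else 0))"
      by (rule sum.cong) auto
    also have "\<dots> = (\<Sum>i\<in>J \<inter> I. a i * G i t)" by (simp add: sum.inter_restrict assms(2))
    also have "J \<inter> I = I" using assms(1) by auto
    finally show ?thesis .
  qed
  then have "v = (\<lambda>t. (\<Sum>i\<in>J. (if i \<in> I then a i else 0) * G i t) mod f)" by (simp add: a)
  then show ?thesis using AspanI[OF assms(2)] by simp
qed

lemma Aspan_empty: "Aspan f G {} = {0}"
  unfolding Aspan_def by (auto simp: fun_eq_iff)

lemma Aspan_zero: "finite I \<Longrightarrow> 0 \<in> Aspan f G I"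
  using AspanI[of I "\<lambda>_. 0" G f] by (simp add: zero_fun_def)

lemma Aspan_G:
  assumes "finite I" "j \<in> I" "\<And>t. G j t mod f = G j t"
  shows "G j \<in> Aspan f G I"
proof -
  have "(\<Sum>i\<in>I. (if i = j then 1 else 0) * G i t) = G j t" for t
  proof -
    have "(\<Sum>i\<in>I. (if i = j then 1 else 0) * G i t) = (\<Sum>i\<in>I. if i = j then G i t else 0)"
      by (rule sum.cong) auto
    then show ?thesis using assms by (simp add: sum.delta)
  qed
  then have "G j = (\<lambda>t. (\<Sum>i\<in>I. (if i = j then 1 else 0) * G i t) mod f)"
    using assms(3) by (simp add: fun_eq_iff)
  then show ?thesis using AspanI[OF assms(1)] by simp
qed


locale bod =
  fixes f :: "'a::{finite,field} poly" and k l :: nat and G :: "nat \<Rightarrow> nat \<Rightarrow> 'a poly"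
    and C :: "(nat \<Rightarrow> 'a poly) set"
  assumes monic_f: "lead_coeff f = 1" and gm: "generator_matrix f k l G C"
    and mon: "\<forall>i<k. monic_vec (G i)"
begin

abbreviation p where "p i \<equiv> (LEAST t. G i t \<noteq> 0)"
abbreviation lc where "lc i \<equiv> Lcoef (G i)"

lemma f_ne: "f \<noteq> 0" using monic_f by auto

lemma C_eq: "C = Aspan f G {..<k}" using gm by (simp add: generator_matrix_def)

lemma C_code: "A_code f l C" using gm unfolding generator_matrix_def by blast

lemma Avecs_red: "u \<in> Avecs f l \<Longrightarrow> u t mod f = u t"
  unfolding Avecs_def Aelems_def by (cases "t < l") auto

lemma G_red: "i < k \<Longrightarrow> G i t mod f = G i t"
  using gm Avecs_red by (auto simp: generator_matrix_def)

lemma C_red: "u \<in> C \<Longrightarrow> u t mod f = u t"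
  using C_code Avecs_red by (auto simp: A_code_def)

lemma red_deg: "x mod f = x \<Longrightarrow> x \<noteq> 0 \<Longrightarrow> degree x < degree f"
  using degree_mod_less[OF f_ne, of x] by auto

lemma G_ne: "i < k \<Longrightarrow> G i \<noteq> 0" using mon by (auto simp: monic_vec_def)

lemma Gp: "i < k \<Longrightarrow> G i (p i) \<noteq> 0"
proof -
  assume "i < k"
  then obtain t where "G i t \<noteq> 0" using G_ne by (auto simp: fun_eq_iff)
  then show ?thesis by (rule LeastI)
qed

lemma G_before: "t < p i \<Longrightarrow> G i t = 0"
  using not_less_Least by blast

lemma Lind_G: "i < k \<Longrightarrow> Lind (G i) = enat (p i)"
  using G_ne by (simp add: Lind_def)

lemma lc_eq: "lc i = G i (p i)" by (simp add: Lcoef_def)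

lemma lc_monic: "i < k \<Longrightarrow> lead_coeff (lc i) = 1"
  using mon by (auto simp: monic_vec_def)

lemma lc_ne: "i < k \<Longrightarrow> lc i \<noteq> 0"
  using lc_monic by fastforce

lemma deg_lc: "i < k \<Longrightarrow> degree (lc i) < degree f"
proof -
  assume i: "i < k"
  have "lc i mod f = lc i" using G_red[OF i] lc_eq by simp
  then show ?thesis using red_deg lc_ne[OF i] by blast
qed

lemma G_in_Aspan: "j < k \<Longrightarrow> G j \<in> Aspan f G {j..<k}"
  by (rule Aspan_G) (auto simp: G_red)

lemma finite_Aelems: "finite (Aelems f)"
proof -
  have "Aelems f \<subseteq> (\<lambda>g. \<Sum>e\<le>degree f. monom (g e) e) ` ({..degree f} \<rightarrow>\<^sub>E UNIV)"
  proof
    fix x assume "x \<in> Aelems f"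
    then have "degree x \<le> degree f"
      using red_deg[of x] by (cases "x = 0") (auto simp: Aelems_def)
    then have "x = (\<Sum>e\<le>degree f. monom (restrict (coeff x) {..degree f} e) e)"
      using poly_as_sum_of_monoms'[of x "degree f"] by simp
    then show "x \<in> (\<lambda>g. \<Sum>e\<le>degree f. monom (g e) e) ` ({..degree f} \<rightarrow>\<^sub>E UNIV)"
      by (intro image_eqI[of _ _ "restrict (coeff x) {..degree f}"]) auto
  qed
  moreover have "finite ({..degree f} \<rightarrow>\<^sub>E (UNIV :: 'a set))" by (rule finite_PiE) auto
  ultimately show ?thesis by (meson finite_imageI finite_subset)
qed

lemma finite_Avecs: "finite (Avecs f l)"
proof -
  have "Avecs f l \<subseteq> (\<lambda>g t. if t < l then g t else 0) ` ({..<l} \<rightarrow>\<^sub>E Aelems f)"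
  proof
    fix u assume u: "u \<in> Avecs f l"
    have "u = (\<lambda>t. if t < l then restrict u {..<l} t else 0)"
      using u by (auto simp: Avecs_def fun_eq_iff)
    moreover have "restrict u {..<l} \<in> {..<l} \<rightarrow>\<^sub>E Aelems f" using u by (auto simp: Avecs_def)
    ultimately show "u \<in> (\<lambda>g t. if t < l then g t else 0) ` ({..<l} \<rightarrow>\<^sub>E Aelems f)" by blast
  qed
  moreover have "finite ({..<l} \<rightarrow>\<^sub>E Aelems f)" by (rule finite_PiE) (auto simp: finite_Aelems)
  ultimately show ?thesis by (meson finite_imageI finite_subset)
qed

lemma finite_C: "finite C"
  using C_code finite_Avecs by (auto simp: A_code_def intro: finite_subset)

end


context bod begin

abbreviation S where "S j \<equiv> subcode C j"

lemma S_closed: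
  "\<forall>u\<in>S j. \<forall>v\<in>S j. u + v \<in> S j \<and> u - v \<in> S j \<and> (\<forall>a. Asmult f a u \<in> S j)"
proof (induction j)
  case 0
  show ?case unfolding subcode.simps C_eq
    by (intro ballI conjI allI Aspan_add Aspan_diff Aspan_Asmult) auto
next
  case (Suc j)
  let ?L = "Lind_code (S j)"
  show ?case
  proof (intro ballI conjI allI)
    fix u v assume u: "u \<in> S (Suc j)" and v: "v \<in> S (Suc j)"
    then have uS: "u \<in> S j" "?L < Lind u" and vS: "v \<in> S j" "?L < Lind v" by auto
    have m: "?L < min (Lind u) (Lind v)" using uS vS by simp
    have "u + v \<in> S j" "u - v \<in> S j" using Suc.IH uS vS by blast+
    moreover have "?L < Lind (u + v)" using m Lind_add[of u v] by (rule less_le_trans)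
    moreover have "?L < Lind (u - v)" using m Lind_diff[of u v] by (rule less_le_trans)
    ultimately show "u + v \<in> S (Suc j)" "u - v \<in> S (Suc j)" by simp_all
    fix a
    have "Asmult f a u \<in> S j" using Suc.IH uS by blast
    moreover have "?L < Lind (Asmult f a u)" using uS(2) Lind_Asmult[of u f a] by (rule less_le_trans)
    ultimately show "Asmult f a u \<in> S (Suc j)" by simp
  qed
qed

lemma S_sub: "S j \<subseteq> C"
  by (induction j) auto

lemma S_mono: "S (Suc j) \<subseteq> S j" by auto

context
  assumes B: "basis_of_divisors C k G"
begin

lemma le: "j < k \<Longrightarrow> leading_element (S j) (G j)"
  using B by (simp add: basis_of_divisors_def)

lemma G_S: "j < k \<Longrightarrow> G j \<in> S j" using le by (simp add: leading_element_def)

lemma LcS: "j < k \<Longrightarrow> Lind_code (S j) = enat (p j)"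
  using le Lind_G by (simp add: leading_element_def)

lemma S_pref: "j < k \<Longrightarrow> v \<in> S j \<Longrightarrow> t < p j \<Longrightarrow> v t = 0"
proof -
  assume j: "j < k" and v: "v \<in> S j" and t: "t < p j"
  have "Lind_code (S j) \<le> Lind v" using v unfolding Lind_code_def by (rule INF_lower)
  then show ?thesis using LcS[OF j] t Lind_ge_D by metis
qed

lemma small_zero:
  assumes j: "j < k" and e: "e \<in> S j" and dg: "degree (e (p j)) < degree (lc j)"
  shows "e (p j) = 0"
proof (rule ccontr)
  let ?r = "e (p j)"
  assume r: "?r \<noteq> 0"
  define c where "c = inverse (lead_coeff ?r)"
  define e' where "e' = Asmult f [:c:] e"
  have e'S: "e' \<in> S j" using S_closed e unfolding e'_def by blast
  have e't: "e' t = smult c (e t) mod f" for t by (simp add: e'_def Asmult_def)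
  have pre: "\<forall>t<p j. e' t = 0" using S_pref[OF j e'S] by blast
  have dr: "degree (smult c ?r) < degree f"
    using dg deg_lc[OF j] by simp
  have e'p: "e' (p j) = smult c ?r" using e't mod_poly_less[OF dr] by simp
  have cne: "c \<noteq> 0" using r by (simp add: c_def)
  have nz: "e' (p j) \<noteq> 0" using e'p cne r by simp
  have Le: "Lind e' = enat (p j)" "Lcoef e' = smult c ?r"
    using Lind_eq[OF pre nz] e'p by auto
  have mon': "lead_coeff (Lcoef e') = 1" using Le r by (simp add: c_def)
  have e'ne: "e' \<noteq> 0" using nz by auto
  have "degree (lc j) \<le> degree (Lcoef e')"
    using le[OF j] e'S e'ne Le mon' LcS[OF j] unfolding leading_element_def by auto
  then show False using Le dg cne by simp
qed

lemma lc_dvd_S: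
  assumes j: "j < k" and v: "v \<in> S j"
  shows "lc j dvd v (p j)"
proof -
  let ?y = "v (p j)"
  define q where "q = ?y div lc j"
  define e where "e = v - Asmult f q (G j)"
  have eS: "e \<in> S j" using S_closed v G_S[OF j] unfolding e_def by blast
  have yr: "?y mod f = ?y" using C_red S_sub v by blast
  have "e (p j) = ?y - (q * lc j) mod f" by (simp add: e_def Asmult_def lc_eq)
  also have "\<dots> = (?y - q * lc j) mod f" using yr by (simp add: poly_mod_diff_left)
  also have "?y - q * lc j = ?y mod lc j" by (simp add: q_def minus_div_mult_eq_mod)
  finally have ep: "e (p j) = ?y mod lc j mod f" .
  show ?thesis
  proof (cases "?y mod lc j = 0")
    case True then show ?thesis by (simp add: dvd_eq_mod_eq_0)
  next
    case False
    have d1: "degree (?y mod lc j) < degree (lc j)" using degree_mod_less'[OF lc_ne[OF j] False] .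
    then have "?y mod lc j mod f = ?y mod lc j" using deg_lc[OF j] by (intro mod_poly_less) simp
    then have "e (p j) = ?y mod lc j" using ep by simp
    then have "e (p j) = 0" using small_zero[OF j eS] d1 by simp
    then show ?thesis using False \<open>e (p j) = ?y mod lc j\<close> by simp
  qed
qed

lemma lc_dvd_f:
  assumes j: "j < k"
  shows "lc j dvd f"
proof -
  define q where "q = f div lc j"
  define e where "e = Asmult f q (G j)"
  have eS: "e \<in> S j" using S_closed G_S[OF j] unfolding e_def by blast
  have "e (p j) = (q * lc j) mod f" by (simp add: e_def Asmult_def lc_eq)
  also have "q * lc j = f - f mod lc j" by (simp add: q_def minus_mod_eq_div_mult)
  also have "(f - f mod lc j) mod f = - (f mod lc j) mod f" by (simp add: poly_mod_diff_left)
  finally have ep: "e (p j) = - (f mod lc j) mod f" .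
  show ?thesis
  proof (cases "f mod lc j = 0")
    case True then show ?thesis by (simp add: dvd_eq_mod_eq_0)
  next
    case False
    have d1: "degree (f mod lc j) < degree (lc j)" using degree_mod_less'[OF lc_ne[OF j] False] .
    then have "- (f mod lc j) mod f = - (f mod lc j)" using deg_lc[OF j] by (intro mod_poly_less) simp
    then have "lc j dvd - (f mod lc j)" using lc_dvd_S[OF j eS] ep by simp
    then have "lc j dvd f mod lc j" by simp
    then show ?thesis using False d1 dvd_imp_degree_le by fastforce
  qed
qed

lemma p_Suc: "Suc j < k \<Longrightarrow> p j < p (Suc j)"
proof -
  assume sj: "Suc j < k"
  have "G (Suc j) \<in> S (Suc j)" using G_S[OF sj] .
  then have "Lind_code (S j) < Lind (G (Suc j))" by simp
  then show ?thesis using LcS[of j] Lind_G[OF sj] sj by simp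
qed

lemma p_mono: "i < j \<Longrightarrow> j < k \<Longrightarrow> p i < p j"
proof (induction j)
  case 0 then show ?case by simp
next
  case (Suc j)
  have pj: "p j < p (Suc j)" using p_Suc Suc.prems(2) by blast
  show ?case
  proof (cases "i = j")
    case True then show ?thesis using pj by simp
  next
    case False
    then have "p i < p j" using Suc by simp
    then show ?thesis using pj by simp
  qed
qed

lemma S_gen: "j \<le> k \<Longrightarrow> S j \<subseteq> Aspan f G {j..<k}"
proof (induction j rule: inc_induct)
  case base
  have "\<not> nonzero_code (S k)" using B by (simp add: basis_of_divisors_def)
  then have "S k \<subseteq> {0}" by (auto simp: nonzero_code_def)
  then show ?case using Aspan_zero[of "{k..<k}" f G] by auto
next
  case (step n)
  show ?case
  proof
    fix c assume c: "c \<in> S n"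
    let ?y = "c (p n)"
    obtain a where a: "?y = lc n * a" using lc_dvd_S[OF step(2) c] by (auto elim: dvdE)
    define c' where "c' = c - Asmult f a (G n)"
    have c'S: "c' \<in> S n" using S_closed c G_S[OF step(2)] unfolding c'_def by blast
    have yr: "?y mod f = ?y" using C_red S_sub c by blast
    have "c' (p n) = ?y - (a * lc n) mod f" by (simp add: c'_def Asmult_def lc_eq)
    also have "\<dots> = 0" using a yr by (simp add: mult.commute)
    finally have c'p: "c' (p n) = 0" .
    have "\<forall>t\<le>p n. c' t = 0" using S_pref[OF step(2) c'S] c'p le_neq_implies_less by blast
    then have "enat (p n) < Lind c'" by (rule Lind_gtI)
    then have "c' \<in> S (Suc n)" using c'S LcS[OF step(2)] by simp
    then have "c' \<in> Aspan f G {Suc n..<k}" using step(3) by blast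
    then have c'A: "c' \<in> Aspan f G {n..<k}" by (rule Aspan_mono[rotated 2]) auto
    have "Asmult f a (G n) \<in> Aspan f G {n..<k}"
      using G_in_Aspan[OF step(2)] by (rule Aspan_Asmult[rotated]) simp
    then have "c' + Asmult f a (G n) \<in> Aspan f G {n..<k}" using c'A by (intro Aspan_add) auto
    then show "c \<in> Aspan f G {n..<k}" by (simp add: c'_def)
  qed
qed

lemma iii_fwd:
  assumes j: "j < k"
  shows "Asmult f (f div lc j) (G j) \<in> Aspan f G {j<..<k}"
proof -
  define e where "e = Asmult f (f div lc j) (G j)"
  have eS: "e \<in> S j" using S_closed G_S[OF j] unfolding e_def by blast
  have "e (p j) = (f div lc j * lc j) mod f" by (simp add: e_def Asmult_def lc_eq)
  also have "f div lc j * lc j = f" using lc_dvd_f[OF j] by simp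
  finally have ep: "e (p j) = 0" by simp
  have "\<forall>t\<le>p j. e t = 0" using S_pref[OF j eS] ep le_neq_implies_less by blast
  then have "enat (p j) < Lind e" by (rule Lind_gtI)
  then have "e \<in> S (Suc j)" using eS LcS[OF j] by simp
  then have "e \<in> Aspan f G {Suc j..<k}" using S_gen[of "Suc j"] j by auto
  then show ?thesis by (simp add: e_def atLeastSucLessThan_greaterThanLessThan)
qed

end
end


lemma bnd_add:
  fixes x y :: "'a::field poly"
  assumes "x = 0 \<or> degree x < D" "y = 0 \<or> degree y < D"
  shows "x + y = 0 \<or> degree (x + y) < D"
proof (cases "x = 0 \<or> y = 0")
  case True then show ?thesis using assms by auto
next
  case False
  then have "degree x < D" "degree y < D" using assms by auto
  then have "degree (x + y) < D" using degree_add_le_max[of x y] by simp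
  then show ?thesis by simp
qed

locale bod2 = bod +
  assumes mono: "\<forall>i j. i < j \<and> j < k \<longrightarrow> (LEAST t. G i t \<noteq> 0) < (LEAST t. G j t \<noteq> 0)"
    and dv: "\<forall>i<k. Lcoef (G i) dvd f"
begin

abbreviation h where "h i \<equiv> f div lc i"
abbreviation d where "d i \<equiv> degree f - degree (lc i)"

definition Phi :: "(nat \<Rightarrow> 'a poly) \<Rightarrow> nat \<Rightarrow> 'a poly" where
  "Phi r = (\<lambda>t. (\<Sum>i<k. r i * G i t) mod f)"

definition bnd :: "(nat \<Rightarrow> 'a poly) \<Rightarrow> bool" where
  "bnd r \<longleftrightarrow> (\<forall>i<k. r i = 0 \<or> degree (r i) < d i)"

lemma f_eq: "i < k \<Longrightarrow> f = h i * lc i"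
  using dv by simp

lemma h_ne: "i < k \<Longrightarrow> h i \<noteq> 0"
  using f_eq f_ne by fastforce

lemma deg_h: "i < k \<Longrightarrow> degree (h i) = d i"
proof -
  assume i: "i < k"
  have "degree f = degree (h i) + degree (lc i)"
    using f_eq[OF i] degree_mult_eq[OF h_ne[OF i] lc_ne[OF i]] by simp
  then show ?thesis by simp
qed

lemma key_mod:
  assumes i: "i < k"
  shows "(a * lc i) mod f = (a mod h i) * lc i"
proof -
  have fe: "h i * lc i = f" using f_eq[OF i] by simp
  have "a * lc i = (a div h i * h i + a mod h i) * lc i" by (simp only: div_mult_mod_eq)
  also have "\<dots> = (a div h i) * (h i * lc i) + (a mod h i) * lc i" by (simp only: distrib_right mult.assoc)
  also have "\<dots> = (a div h i) * f + (a mod h i) * lc i" by (simp only: fe)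
  finally have "(a * lc i) mod f = ((a mod h i) * lc i) mod f" by simp
  also have "\<dots> = (a mod h i) * lc i"
  proof (cases "a mod h i = 0")
    case True then show ?thesis by simp
  next
    case False
    have "degree (a mod h i) < degree (h i)" using degree_mod_less'[OF h_ne[OF i] False] .
    moreover have "degree f = degree (h i) + degree (lc i)"
      using degree_mult_eq[OF h_ne[OF i] lc_ne[OF i]] fe by simp
    ultimately have "degree ((a mod h i) * lc i) < degree f"
      using degree_mult_eq[OF False lc_ne[OF i]] by simp
    then show ?thesis by (rule mod_poly_less)
  qed
  finally show ?thesis .
qed

lemma small_mod: "i < k \<Longrightarrow> (r = 0 \<or> degree r < d i) \<Longrightarrow> r mod h i = r"
  using deg_h[of i] mod_poly_less[of r "h i"] by auto

lemma pref_Aspan: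
  assumes "I \<subseteq> {..<k}" "\<forall>i\<in>I. t < p i" "v \<in> Aspan f G I"
  shows "v t = 0"
proof -
  obtain a where a: "v = (\<lambda>t. (\<Sum>i\<in>I. a i * G i t) mod f)" using assms(3) by (rule AspanE)
  have "(\<Sum>i\<in>I. a i * G i t) = 0"
  proof (rule sum.neutral, rule ballI)
    fix i assume "i \<in> I"
    then have "t < p i" using assms(2) by blast
    then have "G i t = 0" by (rule G_before)
    then show "a i * G i t = 0" by simp
  qed
  then show ?thesis by (simp add: a)
qed

lemma sum_at:
  assumes "finite I" "j \<in> I" "\<forall>i\<in>I. i \<noteq> j \<longrightarrow> a i * G i (p j) = 0"
  shows "(\<Sum>i\<in>I. a i * G i (p j)) = a j * lc j"
proof -
  have "(\<Sum>i\<in>I. a i * G i (p j)) = a j * G j (p j) + (\<Sum>i\<in>I - {j}. a i * G i (p j))"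
    by (rule sum.remove[OF assms(1,2)])
  also have "(\<Sum>i\<in>I - {j}. a i * G i (p j)) = 0"
  proof (rule sum.neutral, rule ballI)
    fix i assume "i \<in> I - {j}"
    then show "a i * G i (p j) = 0" using assms(3) by blast
  qed
  finally show ?thesis by (simp add: lc_eq)
qed

lemma later_zero: "i < j \<Longrightarrow> j < k \<Longrightarrow> G j (p i) = 0"
proof -
  assume "i < j" "j < k"
  then have "p i < p j" using mono by blast
  then show ?thesis by (rule G_before)
qed

lemma Z:
  assumes b: "bnd r" and j: "j < k" and z: "\<forall>i\<le>j. Phi r (p i) = 0"
  shows "\<forall>i\<le>j. r i = 0"
proof -
  have "i \<le> j \<longrightarrow> r i = 0" for i
  proof (induction i rule: less_induct)
    case (less i)
    show ?case
    proof
      assume ij: "i \<le> j"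
      then have ik: "i < k" using j by simp
      have "(\<Sum>i'<k. r i' * G i' (p i)) = r i * lc i"
      proof (rule sum_at)
        show "\<forall>i'\<in>{..<k}. i' \<noteq> i \<longrightarrow> r i' * G i' (p i) = 0"
        proof (intro ballI impI)
          fix i' assume "i' \<in> {..<k}" "i' \<noteq> i"
          then consider "i' < i" | "i < i'" "i' < k" by fastforce
          then show "r i' * G i' (p i) = 0"
          proof cases
            case 1 then show ?thesis using less ij by simp
          next
            case 2 then show ?thesis using later_zero by simp
          qed
        qed
      qed (use ik in auto)
      then have "Phi r (p i) = (r i * lc i) mod f" by (simp add: Phi_def)
      also have "\<dots> = r i * lc i" using key_mod[OF ik] small_mod[OF ik] b ik by (simp add: bnd_def)
      finally have "r i * lc i = 0" using z ij by simp
      then show "r i = 0" using lc_ne[OF ik] by simp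
    qed
  qed
  then show ?thesis by blast
qed

lemma Phi_in_C: "Phi r \<in> C"
  unfolding Phi_def C_eq by (rule AspanI) simp

end

locale bod3 = bod2 +
  assumes iii: "\<forall>i<k. Asmult f (f div Lcoef (G i)) (G i) \<in> Aspan f G {i<..<k}"
begin

abbreviation Sp where "Sp j \<equiv> Aspan f G {j..<k}"

lemma B2:
  assumes j: "j < k" and w: "w \<in> Sp j" and w0: "w (p j) = 0"
  shows "w \<in> Sp (Suc j)"
proof -
  obtain a where a: "w = (\<lambda>t. (\<Sum>i\<in>{j..<k}. a i * G i t) mod f)" using w by (rule AspanE)
  have "(\<Sum>i\<in>{j..<k}. a i * G i (p j)) = a j * lc j"
  proof (rule sum_at)
    show "\<forall>i\<in>{j..<k}. i \<noteq> j \<longrightarrow> a i * G i (p j) = 0"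
    proof (intro ballI impI)
      fix i assume "i \<in> {j..<k}" "i \<noteq> j"
      then have "j < i" "i < k" by auto
      then have "G i (p j) = 0" by (rule later_zero)
      then show "a i * G i (p j) = 0" by simp
    qed
  qed (use j in auto)
  then have "(a j * lc j) mod f = 0" using w0 a by simp
  then have "a j mod h j * lc j = 0" using key_mod[OF j] by simp
  then have am: "a j mod h j = 0" using lc_ne[OF j] by simp
  define q where "q = a j div h j"
  have aj: "a j = q * h j" using div_mult_mod_eq[of "a j" "h j"] am by (simp add: q_def)
  have "Asmult f (h j) (G j) \<in> Aspan f G {Suc j..<k}"
    using iii j by (simp add: atLeastSucLessThan_greaterThanLessThan)
  then obtain b where b: "Asmult f (h j) (G j) = (\<lambda>t. (\<Sum>i\<in>{Suc j..<k}. b i * G i t) mod f)"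
    by (rule AspanE)
  have "w t = (\<Sum>i\<in>{Suc j..<k}. (q * b i + a i) * G i t) mod f" for t
  proof -
    let ?X = "\<Sum>i\<in>{Suc j..<k}. a i * G i t"
    let ?Y = "h j * G j t"
    let ?Y' = "\<Sum>i\<in>{Suc j..<k}. b i * G i t"
    have YY: "?Y mod f = ?Y' mod f" using fun_cong[OF b, of t] by (simp add: Asmult_def)
    have "w t = (a j * G j t + ?X) mod f" using j by (simp add: a sum.atLeast_Suc_lessThan)
    also have "a j * G j t = q * ?Y" using aj by simp
    also have "(q * ?Y + ?X) mod f = ((q * ?Y) mod f + ?X) mod f" by (simp add: mod_add_left_eq)
    also have "(q * ?Y) mod f = (q * (?Y mod f)) mod f" by (simp add: mod_mult_right_eq)
    also have "\<dots> = (q * (?Y' mod f)) mod f" by (simp only: YY)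
    also have "\<dots> = (q * ?Y') mod f" by (simp add: mod_mult_right_eq)
    also have "((q * ?Y') mod f + ?X) mod f = (q * ?Y' + ?X) mod f" by (simp add: mod_add_left_eq)
    also have "q * ?Y' + ?X = (\<Sum>i\<in>{Suc j..<k}. (q * b i + a i) * G i t)"
      by (simp add: sum_distrib_left sum.distrib distrib_right mult.assoc)
    finally show ?thesis .
  qed
  then have "w = (\<lambda>t. (\<Sum>i\<in>{Suc j..<k}. (q * b i + a i) * G i t) mod f)" by auto
  then show ?thesis using AspanI[of "{Suc j..<k}"] by simp
qed

end


context bod3 begin

lemma Sp_pref: "j < k \<Longrightarrow> v \<in> Sp j \<Longrightarrow> t < p j \<Longrightarrow> v t = 0"
proof -
  assume j: "j < k" and v: "v \<in> Sp j" and t: "t < p j"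
  have "\<forall>i\<in>{j..<k}. t < p i"
  proof
    fix i assume i: "i \<in> {j..<k}"
    show "t < p i"
    proof (cases "i = j")
      case True then show ?thesis using t by simp
    next
      case False then have "p j < p i" using i mono by auto
      then show ?thesis using t by simp
    qed
  qed
  moreover have "{j..<k} \<subseteq> {..<k}" by auto
  ultimately show ?thesis using pref_Aspan v by blast
qed

lemma SpSuc_pref: "j < k \<Longrightarrow> v \<in> Sp (Suc j) \<Longrightarrow> t \<le> p j \<Longrightarrow> v t = 0"
proof -
  assume j: "j < k" and v: "v \<in> Sp (Suc j)" and t: "t \<le> p j"
  have "\<forall>i\<in>{Suc j..<k}. t < p i"
  proof
    fix i assume i: "i \<in> {Suc j..<k}"
    then have "p j < p i" using mono by auto
    then show "t < p i" using t by simp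
  qed
  moreover have "{Suc j..<k} \<subseteq> {..<k}" by auto
  ultimately show ?thesis using pref_Aspan v by blast
qed

lemma lc_dvd_Sp:
  assumes j: "j < k" and v: "v \<in> Sp j"
  shows "lc j dvd v (p j)"
proof -
  obtain a where a: "v = (\<lambda>t. (\<Sum>i\<in>{j..<k}. a i * G i t) mod f)" using v by (rule AspanE)
  have "(\<Sum>i\<in>{j..<k}. a i * G i (p j)) = a j * lc j"
  proof (rule sum_at)
    show "\<forall>i\<in>{j..<k}. i \<noteq> j \<longrightarrow> a i * G i (p j) = 0"
    proof (intro ballI impI)
      fix i assume "i \<in> {j..<k}" "i \<noteq> j"
      then have "j < i" "i < k" by auto
      then have "G i (p j) = 0" by (rule later_zero)
      then show "a i * G i (p j) = 0" by simp
    qed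
  qed (use j in auto)
  then have "v (p j) = (a j * lc j) mod f" by (simp add: a)
  also have "\<dots> = a j mod h j * lc j" by (rule key_mod[OF j])
  finally show ?thesis by simp
qed

lemma LcSp: "j < k \<Longrightarrow> Lind_code (Sp j) = enat (p j)"
proof -
  assume j: "j < k"
  have G: "G j \<in> Sp j" by (rule G_in_Aspan[OF j])
  show ?thesis unfolding Lind_code_def
  proof (rule antisym)
    show "(INF c\<in>Sp j. Lind c) \<le> enat (p j)" using G Lind_G[OF j] by (metis INF_lower)
    show "enat (p j) \<le> (INF c\<in>Sp j. Lind c)"
    proof (rule INF_greatest)
      fix c assume "c \<in> Sp j"
      then have "\<forall>t<p j. c t = 0" using Sp_pref[OF j] by blast
      then show "enat (p j) \<le> Lind c" by (rule Lind_geI)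
    qed
  qed
qed

lemma Sp_Suc: "j < k \<Longrightarrow> Sp (Suc j) = {c \<in> Sp j. Lind_code (Sp j) < Lind c}"
proof -
  assume j: "j < k"
  show ?thesis
  proof (intro equalityI subsetI)
    fix c assume c: "c \<in> Sp (Suc j)"
    have "c \<in> Sp j" using c by (rule Aspan_mono[rotated 2]) auto
    moreover have "\<forall>t\<le>p j. c t = 0" using SpSuc_pref[OF j c] by blast
    then have "enat (p j) < Lind c" by (rule Lind_gtI)
    ultimately show "c \<in> {c \<in> Sp j. Lind_code (Sp j) < Lind c}" using LcSp[OF j] by simp
  next
    fix c assume "c \<in> {c \<in> Sp j. Lind_code (Sp j) < Lind c}"
    then have c: "c \<in> Sp j" "enat (p j) < Lind c" using LcSp[OF j] by auto
    then have "c (p j) = 0" using Lind_gt by blast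
    then show "c \<in> Sp (Suc j)" using B2[OF j c(1)] by blast
  qed
qed

lemma le_Sp: "j < k \<Longrightarrow> leading_element (Sp j) (G j)"
proof -
  assume j: "j < k"
  have "\<forall>c'\<in>Sp j. c' \<noteq> 0 \<and> Lind c' = Lind_code (Sp j) \<and> lead_coeff (Lcoef c') = 1 \<longrightarrow>
        degree (Lcoef (G j)) \<le> degree (Lcoef c')"
  proof (intro ballI impI)
    fix c' assume c': "c' \<in> Sp j" and H: "c' \<noteq> 0 \<and> Lind c' = Lind_code (Sp j) \<and> lead_coeff (Lcoef c') = 1"
    then have L: "Lind c' = enat (p j)" using LcSp[OF j] by simp
    have "c' (p j) \<noteq> 0" "Lcoef c' = c' (p j)" using Lind_nonzero[OF _ L] H by auto
    moreover have "lc j dvd c' (p j)" by (rule lc_dvd_Sp[OF j c'])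
    ultimately show "degree (Lcoef (G j)) \<le> degree (Lcoef c')" using dvd_imp_degree_le by metis
  qed
  then show ?thesis unfolding leading_element_def
    using G_in_Aspan[OF j] G_ne[OF j] LcSp[OF j] Lind_G[OF j] lc_monic[OF j] by auto
qed

lemma subcode_eq: "j \<le> k \<Longrightarrow> subcode C j = Sp j"
proof (induction j)
  case 0 then show ?case using C_eq by (simp add: atLeast0LessThan)
next
  case (Suc j)
  then have j: "j < k" by simp
  have "subcode C (Suc j) = {c \<in> Sp j. Lind_code (Sp j) < Lind c}" using Suc by simp
  also have "\<dots> = Sp (Suc j)" using Sp_Suc[OF j] by simp
  finally show ?case .
qed

lemma basis: "basis_of_divisors C k G"
  unfolding basis_of_divisors_def
proof (intro conjI allI impI)
  fix j assume j: "j < k"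
  show "nonzero_code (subcode C j)"
    using subcode_eq[of j] j G_in_Aspan[OF j] G_ne[OF j] by (auto simp: nonzero_code_def)
  show "leading_element (subcode C j) (G j)" using subcode_eq[of j] j le_Sp[OF j] by simp
next
  show "\<not> nonzero_code (subcode C k)" using subcode_eq[of k] Aspan_empty[of f G]
    by (simp add: nonzero_code_def)
qed

lemma decompose: "j \<le> k \<Longrightarrow> v \<in> Sp j \<Longrightarrow> \<exists>r. bnd r \<and> v = Phi r"
proof (induction j arbitrary: v rule: inc_induct)
  case base
  then have "v = 0" using Aspan_empty[of f G] by simp
  then show ?case by (intro exI[of _ "\<lambda>_. 0"]) (simp add: bnd_def Phi_def zero_fun_def)
next
  case (step n)
  have n: "n < k" using step by simp
  obtain a where a: "v = (\<lambda>t. (\<Sum>i\<in>{n..<k}. a i * G i t) mod f)" using step(4) by (rule AspanE)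
  define \<rho> where "\<rho> = a n mod h n"
  have \<rho>b: "\<rho> = 0 \<or> degree \<rho> < d n"
    using degree_mod_less[OF h_ne[OF n], of "a n"] deg_h[OF n] by (auto simp: \<rho>_def)
  have "(\<Sum>i\<in>{n..<k}. a i * G i (p n)) = a n * lc n"
  proof (rule sum_at)
    show "\<forall>i\<in>{n..<k}. i \<noteq> n \<longrightarrow> a i * G i (p n) = 0"
    proof (intro ballI impI)
      fix i assume "i \<in> {n..<k}" "i \<noteq> n"
      then have "n < i" "i < k" by auto
      then have "G i (p n) = 0" by (rule later_zero)
      then show "a i * G i (p n) = 0" by simp
    qed
  qed (use n in auto)
  then have vp: "v (p n) = \<rho> * lc n" using key_mod[OF n] by (simp add: a \<rho>_def)
  have \<rho>m: "(\<rho> * lc n) mod f = \<rho> * lc n" using key_mod[OF n, of \<rho>] by (simp add: \<rho>_def)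
  define w where "w = v - Asmult f \<rho> (G n)"
  have GA: "Asmult f \<rho> (G n) \<in> Sp n" using G_in_Aspan[OF n] by (rule Aspan_Asmult[rotated]) simp
  have wS: "w \<in> Sp n" unfolding w_def using step(4) GA by (intro Aspan_diff) auto
  have "w (p n) = 0" using vp \<rho>m by (simp add: w_def Asmult_def lc_eq)
  then have "w \<in> Sp (Suc n)" using B2[OF n wS] by blast
  then obtain r' where r': "bnd r'" "w = Phi r'" using step(3) by blast
  define r where "r = (\<lambda>i. r' i + (if i = n then \<rho> else 0))"
  have "bnd r" unfolding bnd_def
  proof (intro allI impI)
    fix i assume i: "i < k"
    show "r i = 0 \<or> degree (r i) < d i"
    proof (cases "i = n")
      case True
      have "r' n = 0 \<or> degree (r' n) < d n" using r'(1) n by (simp add: bnd_def)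
      from bnd_add[OF this \<rho>b] show ?thesis using True by (simp add: r_def)
    next
      case False then show ?thesis using r'(1) i by (simp add: r_def bnd_def)
    qed
  qed
  moreover have "v = Phi r"
  proof
    fix t
    have "v t = w t + Asmult f \<rho> (G n) t" by (simp add: w_def)
    also have "\<dots> = (\<Sum>i<k. r' i * G i t) mod f + (\<rho> * G n t) mod f"
      by (simp add: r'(2) Phi_def Asmult_def)
    also have "\<dots> = ((\<Sum>i<k. r' i * G i t) + \<rho> * G n t) mod f" by (simp add: poly_mod_add_left)
    also have "(\<Sum>i<k. r' i * G i t) + \<rho> * G n t = (\<Sum>i<k. r i * G i t)"
    proof -
      have "(\<Sum>i<k. r i * G i t) = (\<Sum>i<k. r' i * G i t) + (\<Sum>i<k. if i = n then \<rho> * G i t else 0)"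
      proof -
        have "(\<Sum>i<k. r i * G i t) = (\<Sum>i<k. r' i * G i t + (if i = n then \<rho> * G i t else 0))"
          by (rule sum.cong) (auto simp: r_def distrib_right)
        then show ?thesis by (simp add: sum.distrib)
      qed
      also have "(\<Sum>i<k. if i = n then \<rho> * G i t else 0) = \<rho> * G n t" using n by (simp add: sum.delta)
      finally show ?thesis by simp
    qed
    finally show "v t = Phi r t" by (simp add: Phi_def)
  qed
  ultimately show ?case by blast
qed

end


abbreviation sc :: "'a::field \<Rightarrow> (nat \<Rightarrow> 'a poly) \<Rightarrow> (nat \<Rightarrow> 'a poly)" where
  "sc \<equiv> (\<lambda>c u. (\<lambda>j. smult c (u j)))"

lemma vs_sc: "vector_space (sc :: 'a::field \<Rightarrow> _)"
  by unfold_locales (auto simp: fun_eq_iff smult_add_right smult_add_left)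

lemma card_subspace:
  fixes V :: "(nat \<Rightarrow> 'a::{finite,field} poly) set"
  assumes fin: "finite V" and sub: "module.subspace sc V"
  shows "card V = card (UNIV :: 'a set) ^ vector_space.dim sc V"
proof -
  interpret vs: vector_space "sc :: 'a \<Rightarrow> _" by (rule vs_sc)
  obtain B where B: "B \<subseteq> V" "vs.independent B" "V \<subseteq> vs.span B" "card B = vs.dim V"
    by (rule vs.basis_exists)
  have finB: "finite B" using B(1) fin by (rule finite_subset)
  have spanV: "vs.span B = V"
    by (rule equalityI[OF vs.span_minimal[OF B(1) sub] B(3)])
  define \<Theta> where "\<Theta> g = (\<Sum>v\<in>B. sc (g v) v)" for g
  have img: "\<Theta> ` (B \<rightarrow>\<^sub>E UNIV) = V"
  proof -
    have "\<Theta> ` (B \<rightarrow>\<^sub>E UNIV) = range \<Theta>"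
    proof
      show "range \<Theta> \<subseteq> \<Theta> ` (B \<rightarrow>\<^sub>E UNIV)"
      proof
        fix x assume "x \<in> range \<Theta>"
        then obtain u where x: "x = \<Theta> u" by blast
        have "\<Theta> (restrict u B) = \<Theta> u" unfolding \<Theta>_def by (rule sum.cong) auto
        moreover have "restrict u B \<in> B \<rightarrow>\<^sub>E UNIV" by simp
        ultimately show "x \<in> \<Theta> ` (B \<rightarrow>\<^sub>E UNIV)" using x by (metis image_eqI)
      qed
    qed (rule image_subsetI, simp)
    also have "\<dots> = vs.span B" using vs.span_finite[OF finB] by (simp add: \<Theta>_def)
    finally show ?thesis using spanV by simp
  qed
  have inj: "inj_on \<Theta> (B \<rightarrow>\<^sub>E UNIV)"
  proof (rule inj_onI)
    fix g g' assume g: "g \<in> B \<rightarrow>\<^sub>E UNIV" and g': "g' \<in> B \<rightarrow>\<^sub>E UNIV" and eq: "\<Theta> g = \<Theta> g'"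
    have "\<Theta> g - \<Theta> g' = (\<Sum>v\<in>B. sc (g v) v - sc (g' v) v)"
      unfolding \<Theta>_def by (rule sum_subtractf[symmetric])
    also have "\<dots> = (\<Sum>v\<in>B. sc (g v - g' v) v)"
      by (rule sum.cong[OF refl]) (rule vs.scale_left_diff_distrib[symmetric])
    finally have z: "(\<Sum>v\<in>B. sc (g v - g' v) v) = 0" using eq by (simp only: diff_self)
    have "\<forall>v\<in>B. g v - g' v = 0"
    proof (rule ccontr)
      assume "\<not> (\<forall>v\<in>B. g v - g' v = 0)"
      then obtain v0 where v0: "v0 \<in> B" "g v0 - g' v0 \<noteq> 0" by blast
      have "vs.dependent B"
        unfolding vs.dependent_finite[OF finB]
      proof (rule exI[of _ "\<lambda>v. g v - g' v"], rule conjI)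
        show "\<exists>v\<in>B. g v - g' v \<noteq> 0" using v0 by blast
      qed (rule z)
      then show False using B(2) by contradiction
    qed
    then show "g = g'" using g g' by (intro PiE_ext) auto
  qed
  have "card V = card (B \<rightarrow>\<^sub>E (UNIV :: 'a set))" using card_image[OF inj] img by simp
  also have "\<dots> = card (UNIV :: 'a set) ^ card B" using card_PiE[OF finB, of "\<lambda>_. UNIV :: 'a set"] by simp
  finally show ?thesis using B(4) by simp
qed

lemma card_field_gt1: "1 < card (UNIV :: 'a::{finite,field} set)"
proof -
  have "card {0, 1::'a} \<le> card (UNIV :: 'a set)" by (rule card_mono) auto
  then show ?thesis by simp
qed

lemma sum_monom_lt:
  assumes "r = 0 \<or> degree r < D"
  shows "(\<Sum>e<D. monom (coeff r e) e) = r"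
proof (cases "r = 0")
  case True then show ?thesis by simp
next
  case False
  then have D: "degree r \<le> D - 1" "D > 0" using assms by auto
  have "{..<D} = {..D - 1}" using D by auto
  then show ?thesis using poly_as_sum_of_monoms'[OF D(1)] by simp
qed

context bod begin

lemma C_subspace: "module.subspace sc C"
proof -
  interpret vs: vector_space "sc :: 'a \<Rightarrow> _" by (rule vs_sc)
  have "sc c x = Asmult f [:c:] x" if "x \<in> C" for c x
    using C_red[OF that] by (simp add: Asmult_def fun_eq_iff mod_smult_left)
  then show ?thesis unfolding vs.subspace_def C_eq
    using Aspan_zero[of "{..<k}" f G] Aspan_add[of "{..<k}" _ f G] Aspan_Asmult[of "{..<k}" _ f G]
    by (auto simp: C_eq)
qed

lemma card_C: "card C = card (UNIV :: 'a set) ^ dimF C"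
  unfolding dimF_def by (rule card_subspace[OF finite_C C_subspace])

end

context bod2 begin

definition Sig where "Sig = Sigma {..<k} (\<lambda>i. {..<d i})"
definition rg :: "(nat \<times> nat \<Rightarrow> 'a) \<Rightarrow> nat \<Rightarrow> 'a poly" where
  "rg g = (\<lambda>i. \<Sum>e<d i. monom (g (i, e)) e)"
definition Psi where "Psi g = Phi (rg g)"

lemma bnd_rg: "bnd (rg g)"
  unfolding bnd_def rg_def
proof (intro allI impI)
  fix i assume "i < k"
  show "(\<Sum>e<d i. monom (g (i, e)) e) = 0 \<or> degree (\<Sum>e<d i. monom (g (i, e)) e) < d i"
  proof (cases "d i = 0")
    case True then show ?thesis by simp
  next
    case False
    then have "degree (\<Sum>e<d i. monom (g (i, e)) e) < d i"
      by (intro degree_sum_less) (auto simp: degree_monom_le intro: le_less_trans[OF degree_monom_le])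
    then show ?thesis by simp
  qed
qed

lemma coeff_rg: "e < d i \<Longrightarrow> coeff (rg g i) e = g (i, e)"
  by (simp add: rg_def coeff_sum)

lemma Phi_diff: "Phi r - Phi r' = Phi (\<lambda>i. r i - r' i)"
  by (simp add: Phi_def fun_eq_iff poly_mod_diff_left left_diff_distrib sum_subtractf)

lemma bnd_diff: "bnd r \<Longrightarrow> bnd r' \<Longrightarrow> bnd (\<lambda>i. r i - r' i)"
proof -
  assume b: "bnd r" "bnd r'"
  show ?thesis unfolding bnd_def
  proof (intro allI impI)
    fix i assume i: "i < k"
    have "r i = 0 \<or> degree (r i) < d i" "- r' i = 0 \<or> degree (- r' i) < d i"
      using b i by (auto simp: bnd_def)
    from bnd_add[OF this] show "r i - r' i = 0 \<or> degree (r i - r' i) < d i" by simp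
  qed
qed

lemma Phi_zero_imp: "bnd r \<Longrightarrow> Phi r = 0 \<Longrightarrow> \<forall>i<k. r i = 0"
proof -
  assume b: "bnd r" and z: "Phi r = 0"
  show ?thesis
  proof (cases k)
    case 0 then show ?thesis by simp
  next
    case (Suc k')
    have "\<forall>i\<le>k'. r i = 0" using Z[OF b, of k'] z Suc by simp
    then show ?thesis using Suc by auto
  qed
qed

lemma inj_Psi: "inj_on Psi (Sig \<rightarrow>\<^sub>E UNIV)"
proof (rule inj_onI)
  fix g g' assume g: "g \<in> Sig \<rightarrow>\<^sub>E UNIV" and g': "g' \<in> Sig \<rightarrow>\<^sub>E UNIV" and eq: "Psi g = Psi g'"
  have "Phi (\<lambda>i. rg g i - rg g' i) = 0" using eq Phi_diff[of "rg g" "rg g'"] by (simp add: Psi_def)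
  then have "\<forall>i<k. rg g i - rg g' i = 0" using Phi_zero_imp bnd_diff[OF bnd_rg bnd_rg] by blast
  then have "\<forall>i<k. rg g i = rg g' i" by simp
  show "g = g'"
  proof (rule PiE_ext[OF g g'])
    fix x assume "x \<in> Sig"
    then obtain i e where x: "x = (i, e)" "i < k" "e < d i" by (auto simp: Sig_def)
    have "coeff (rg g i) e = coeff (rg g' i) e" using \<open>\<forall>i<k. rg g i = rg g' i\<close> x by simp
    then show "g x = g' x" using coeff_rg[OF x(3)] x(1) by simp
  qed
qed

lemma card_PiSig: "card (Sig \<rightarrow>\<^sub>E (UNIV :: 'a set)) = card (UNIV :: 'a set) ^ (\<Sum>i<k. d i)"
proof -
  have fin: "finite Sig" by (simp add: Sig_def)
  have "card Sig = (\<Sum>i<k. d i)" by (simp add: Sig_def)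
  then show ?thesis using card_PiE[OF fin, of "\<lambda>_. UNIV :: 'a set"] by simp
qed

lemma Psi_C: "Psi ` (Sig \<rightarrow>\<^sub>E UNIV) \<subseteq> C"
  using Phi_in_C by (auto simp: Psi_def)

lemma card_img: "card (Psi ` (Sig \<rightarrow>\<^sub>E UNIV)) = card (UNIV :: 'a set) ^ (\<Sum>i<k. d i)"
  using card_image[OF inj_Psi] card_PiSig by simp

lemma dim_iff:
  "(\<forall>i<k. Asmult f (f div Lcoef (G i)) (G i) \<in> Aspan f G {i<..<k}) \<longleftrightarrow> dimF C = (\<Sum>i<k. d i)"
proof
  assume iii': "\<forall>i<k. Asmult f (f div Lcoef (G i)) (G i) \<in> Aspan f G {i<..<k}"
  interpret b3: bod3 f k l G C by unfold_locales (use iii' in auto)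
  have "C \<subseteq> Psi ` (Sig \<rightarrow>\<^sub>E UNIV)"
  proof
    fix v assume "v \<in> C"
    then have "v \<in> b3.Sp 0" using C_eq by (simp add: atLeast0LessThan)
    then obtain r where r: "bnd r" "v = Phi r" using b3.decompose[of 0 v] by auto
    define g where "g = restrict (\<lambda>(i, e). coeff (r i) e) Sig"
    have gP: "g \<in> Sig \<rightarrow>\<^sub>E UNIV" by (simp add: g_def)
    have "rg g i = r i" if "i < k" for i
    proof -
      have "rg g i = (\<Sum>e<d i. monom (coeff (r i) e) e)"
        unfolding rg_def g_def using that by (intro sum.cong) (auto simp: Sig_def)
      also have "\<dots> = r i" using r(1) that by (intro sum_monom_lt) (auto simp: bnd_def)
      finally show ?thesis .
    qed
    then have "Phi (rg g) = Phi r" unfolding Phi_def by (auto intro!: sum.cong)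
    then have "v = Psi g" using r(2) by (simp add: Psi_def)
    then show "v \<in> Psi ` (Sig \<rightarrow>\<^sub>E UNIV)" using gP by blast
  qed
  then have "Psi ` (Sig \<rightarrow>\<^sub>E UNIV) = C" using Psi_C by blast
  then have "card (UNIV :: 'a set) ^ dimF C = card (UNIV :: 'a set) ^ (\<Sum>i<k. d i)" using card_img card_C by simp
  then show "dimF C = (\<Sum>i<k. d i)" using card_field_gt1 power_inject_exp by blast
next
  assume dimeq: "dimF C = (\<Sum>i<k. d i)"
  have "card (Psi ` (Sig \<rightarrow>\<^sub>E UNIV)) = card C" using card_img card_C dimeq by simp
  then have imgC: "Psi ` (Sig \<rightarrow>\<^sub>E UNIV) = C" using card_subset_eq[OF finite_C Psi_C] by blast
  show "\<forall>i<k. Asmult f (f div Lcoef (G i)) (G i) \<in> Aspan f G {i<..<k}"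
  proof (intro allI impI)
    fix j assume j: "j < k"
    define x where "x = Asmult f (h j) (G j)"
    have "G j \<in> Aspan f G {..<k}" using j by (intro Aspan_G) (auto simp: G_red)
    then have "x \<in> C" unfolding x_def C_eq by (rule Aspan_Asmult[rotated]) simp
    then obtain g where "x = Psi g" using imgC by blast
    then have x: "x = Phi (rg g)" by (simp add: Psi_def)
    have "\<forall>i\<le>j. Phi (rg g) (p i) = 0"
    proof (intro allI impI)
      fix i assume ij: "i \<le> j"
      have "x (p i) = (h j * G j (p i)) mod f" by (simp add: x_def Asmult_def)
      also have "\<dots> = 0"
      proof (cases "i = j")
        case True
        have "h j * lc j = f" using f_eq[OF j] by simp
        then show ?thesis using True by (simp add: lc_eq)
      next
        case False then have "i < j" using ij by simp
        then show ?thesis using later_zero[OF _ j] by simp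
      qed
      finally show "Phi (rg g) (p i) = 0" using x by simp
    qed
    then have z: "\<forall>i\<le>j. rg g i = 0" using Z[OF bnd_rg j] by blast
    have "x = (\<lambda>t. (\<Sum>i\<in>{Suc j..<k}. rg g i * G i t) mod f)"
    proof
      fix t
      have "(\<Sum>i<k. rg g i * G i t) = (\<Sum>i\<in>{Suc j..<k}. rg g i * G i t)"
        by (rule sum.mono_neutral_right) (use z in auto)
      then show "x t = (\<Sum>i\<in>{Suc j..<k}. rg g i * G i t) mod f" using x by (simp add: Phi_def)
    qed
    then have "x \<in> Aspan f G {Suc j..<k}" using AspanI[of "{Suc j..<k}"] by simp
    then show "Asmult f (f div Lcoef (G j)) (G j) \<in> Aspan f G {j<..<k}"
      by (simp add: x_def atLeastSucLessThan_greaterThanLessThan)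
  qed
qed

end


theorem mainTheorem1:
  fixes f :: "'a::{finite,field} poly" and m k l :: nat
    and G :: "nat \<Rightarrow> nat \<Rightarrow> 'a poly" and C :: "(nat \<Rightarrow> 'a poly) set"
  assumes "lead_coeff f = 1" and "m = degree f"
    and "generator_matrix f k l G C"
    and "\<forall>i<k. monic_vec (G i)"
  shows "(basis_of_divisors C k G \<longleftrightarrow>
            (\<forall>i j. i < j \<and> j < k \<longrightarrow> Lind (G i) < Lind (G j)) \<and>
            (\<forall>i<k. Lcoef (G i) dvd f) \<and>
            (\<forall>i<k. Asmult f (f div Lcoef (G i)) (G i) \<in> Aspan f G {i<..<k}))
       \<and> (basis_of_divisors C k G \<longleftrightarrow>
            (\<forall>i j. i < j \<and> j < k \<longrightarrow> Lind (G i) < Lind (G j)) \<and>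
            (\<forall>i<k. Lcoef (G i) dvd f) \<and>
            dimF C = (\<Sum>i<k. m - degree (Lcoef (G i))))"
proof -
  interpret bod f k l G C using assms(1,3,4) by unfold_locales
  have I_iff: "(\<forall>i j. i < j \<and> j < k \<longrightarrow> Lind (G i) < Lind (G j)) \<longleftrightarrow>
      (\<forall>i j. i < j \<and> j < k \<longrightarrow> (LEAST t. G i t \<noteq> 0) < (LEAST t. G j t \<noteq> 0))"
  proof -
    have "Lind (G i) < Lind (G j) \<longleftrightarrow> (LEAST t. G i t \<noteq> 0) < (LEAST t. G j t \<noteq> 0)"
      if "i < j" "j < k" for i j
      using Lind_G[of i] Lind_G[of j] that by simp
    then show ?thesis by blast
  qed
  have first: "basis_of_divisors C k G \<longleftrightarrow>
            (\<forall>i j. i < j \<and> j < k \<longrightarrow> Lind (G i) < Lind (G j)) \<and>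
            (\<forall>i<k. Lcoef (G i) dvd f) \<and>
            (\<forall>i<k. Asmult f (f div Lcoef (G i)) (G i) \<in> Aspan f G {i<..<k})"
  proof
    assume B: "basis_of_divisors C k G"
    have "\<forall>i j. i < j \<and> j < k \<longrightarrow> (LEAST t. G i t \<noteq> 0) < (LEAST t. G j t \<noteq> 0)"
      using p_mono[OF B] by blast
    then show "(\<forall>i j. i < j \<and> j < k \<longrightarrow> Lind (G i) < Lind (G j)) \<and>
            (\<forall>i<k. Lcoef (G i) dvd f) \<and>
            (\<forall>i<k. Asmult f (f div Lcoef (G i)) (G i) \<in> Aspan f G {i<..<k})"
      using I_iff lc_dvd_f[OF B] iii_fwd[OF B] by blast
  next
    assume H: "(\<forall>i j. i < j \<and> j < k \<longrightarrow> Lind (G i) < Lind (G j)) \<and>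
            (\<forall>i<k. Lcoef (G i) dvd f) \<and>
            (\<forall>i<k. Asmult f (f div Lcoef (G i)) (G i) \<in> Aspan f G {i<..<k})"
    interpret b3: bod3 f k l G C
      by unfold_locales (use H I_iff in auto)
    show "basis_of_divisors C k G" by (rule b3.basis)
  qed
  have second: "(\<forall>i<k. Asmult f (f div Lcoef (G i)) (G i) \<in> Aspan f G {i<..<k}) \<longleftrightarrow>
      dimF C = (\<Sum>i<k. m - degree (Lcoef (G i)))"
    if H: "(\<forall>i j. i < j \<and> j < k \<longrightarrow> Lind (G i) < Lind (G j))" "(\<forall>i<k. Lcoef (G i) dvd f)"
  proof -
    interpret b2: bod2 f k l G C
      by unfold_locales (use H I_iff in auto)
    show ?thesis using b2.dim_iff assms(2) by simp
  qed
  show ?thesis using first second by blast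
qed


end
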